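(* Let $m,n\in\mathbb N$, let $\Box=(n^m)$, and let $\lambda$ be a partition (possibly empty) such that $[\lambda^+]\subseteq[\Box]$, where $\lambda^+=(\lambda_1+1,\lambda_2,\dots,\lambda_{\ell(\lambda)})$. Then \[\frac{f_\lambda\, f_{\Box\setminus\lambda^+}}{f_{\lambda^+}\, f_{\Box\setminus\lambda}}=\frac{(m+\lambda_1)(n-\lambda_1)}{(|\lambda|+1)(mn-|\lambda|)}.\]
   Context: $f_\mu$ denotes the number of standard Young tableaux of shape $\mu$ ($f_\emptyset=1$); $[\mu]=\{(i,j):i\in[\ell(\mu)],j\in[\mu_i]\}$ is the Young diagram (matrix coordinates); for the empty partition $\lambda_1=0$. For $\Box=(n^m)$ and $[\mu]\subseteq[\Box]$, $\Box\setminus\mu$ is the partition with Young diagram $\{(m-i+1,n-j+1):(i,j)\in[\Box]\setminus[\mu]\}$. *)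

theory Defs
  imports Complex_Main
begin

text \<open>Partitions are represented as lists of positive naturals in weakly decreasing order.
  Parts are indexed from 1: the i-th part is mu ! (i - 1).\<close>

definition is_partition :: "nat list \<Rightarrow> bool" where
  "is_partition mu \<longleftrightarrow> sorted_wrt (\<ge>) mu \<and> (\<forall>x\<in>set mu. 0 < x)"

definition young :: "nat list \<Rightarrow> (nat \<times> nat) set" where
  "young mu = {(i, j). 1 \<le> i \<and> i \<le> length mu \<and> 1 \<le> j \<and> j \<le> mu ! (i - 1)}"

definition psize :: "nat list \<Rightarrow> nat" where
  "psize mu = sum_list mu"

definition first_part :: "nat list \<Rightarrow> nat" where
  "first_part mu = (case mu of [] \<Rightarrow> 0 | x # _ \<Rightarrow> x)"

definition plus_part :: "nat list \<Rightarrow> nat list" where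
  "plus_part mu = (case mu of [] \<Rightarrow> [1] | x # xs \<Rightarrow> (x + 1) # xs)"

definition syt :: "nat list \<Rightarrow> (nat \<times> nat \<Rightarrow> nat) set" where
  "syt mu = {T. bij_betw T (young mu) {1..psize mu}
              \<and> (\<forall>c. c \<notin> young mu \<longrightarrow> T c = 0)
              \<and> (\<forall>i j. (i, j) \<in> young mu \<and> (i, j + 1) \<in> young mu \<longrightarrow> T (i, j) < T (i, j + 1))
              \<and> (\<forall>i j. (i, j) \<in> young mu \<and> (i + 1, j) \<in> young mu \<longrightarrow> T (i, j) < T (i + 1, j))}"

definition num_syt :: "nat list \<Rightarrow> nat" where
  "num_syt mu = card (syt mu)"

definition box :: "nat \<Rightarrow> nat \<Rightarrow> (nat \<times> nat) set" where
  "box m n = {(i, j). 1 \<le> i \<and> i \<le> m \<and> 1 \<le> j \<and> j \<le> n}"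

definition box_minus :: "nat \<Rightarrow> nat \<Rightarrow> nat list \<Rightarrow> nat list" where
  "box_minus m n mu = (THE nu. is_partition nu \<and>
      young nu = {(m - i + 1, n - j + 1) | i j. (i, j) \<in> box m n - young mu})"

end

theory Submission
  imports Defs "HOL-Library.FuncSet"
begin

lemma pf: fixes a b X c :: real
  assumes "a \<noteq> 0" "b \<noteq> 0" "b - a \<noteq> 0"
  shows "X/a*(c*((b-1)/b)) = X/a*c - (X/a*c - X/b*c)/(b-a)"
proof -
  have "X/a*c - X/b*c = X*c*(b-a)/(a*b)" using assms by (simp add: field_simps)
  then have "(X/a*c - X/b*c)/(b-a) = X*c/(a*b)" using assms by simp
  then show ?thesis using assms by (simp add: field_simps)
qed

definition cf :: "(nat \<Rightarrow> real) \<Rightarrow> nat \<Rightarrow> nat \<Rightarrow> real" where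
  "cf x k i = (\<Prod>j\<in>{..<k} - {i}. (x i - x j - 1) / (x i - x j))"

definition GG :: "(nat \<Rightarrow> real) \<Rightarrow> nat \<Rightarrow> real \<Rightarrow> real" where
  "GG x k z = (\<Prod>j<k. (z - x j - 1) / (z - x j))"

lemma cf_Suc:
  assumes "i < k"
  shows "cf x (Suc k) i = cf x k i * ((x i - x k - 1) / (x i - x k))"
proof -
  have "{..<Suc k} - {i} = insert k ({..<k} - {i})" using assms by auto
  then show ?thesis unfolding cf_def by (simp add: mult.commute)
qed

lemma cf_Suc_last: "cf x (Suc k) k = GG x k (x k)"
proof -
  have "{..<Suc k} - {k} = {..<k}" by auto
  then show ?thesis unfolding cf_def GG_def by simp
qed

lemma S_identity:
  assumes "inj_on x {..<k}" "z \<notin> x ` {..<k}"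
  shows "(\<Sum>i<k. x i / (x i - z) * cf x k i) = z * GG x k z - z + real k"
  using assms
proof (induction k arbitrary: z)
  case 0
  then show ?case by (simp add: GG_def)
next
  case (Suc k)
  let ?L = "\<lambda>w. (\<Sum>i<k. x i / (x i - w) * cf x k i)"
  have inj: "inj_on x {..<k}" using Suc.prems(1) by (simp add: inj_on_subset)
  have zk: "z \<notin> x ` {..<k}" using Suc.prems(2) by auto
  have xk: "x k \<notin> x ` {..<k}" using Suc.prems(1) by (auto simp: inj_on_def) (metis lessThan_iff less_SucI less_Suc_eq less_irrefl)
  have zxk: "z \<noteq> x k" using Suc.prems(2) by auto
  have IH1: "?L z = z * GG x k z - z + real k" using Suc.IH[OF inj zk] .
  have IH2: "?L (x k) = x k * GG x k (x k) - x k + real k" using Suc.IH[OF inj xk] .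
  have trm: "x i / (x i - z) * (cf x k i * ((x i - x k - 1) / (x i - x k)))
      = x i / (x i - z) * cf x k i - (x i / (x i - z) * cf x k i - x i / (x i - x k) * cf x k i) / (z - x k)"
    if "i < k" for i
  proof -
    have a: "x i \<noteq> z" using zk that by auto
    have b: "x i \<noteq> x k" using xk that by (metis image_eqI lessThan_iff)
    have a': "x i - z \<noteq> 0" using a by simp
    have b': "x i - x k \<noteq> 0" using b by simp
    have c': "z - x k \<noteq> 0" using zxk by simp
    have e: "(x i - x k) - (x i - z) = z - x k" by simp
    show ?thesis using pf[of "x i - z" "x i - x k" "x i" "cf x k i"] a' b' c' unfolding e by simp
  qed
  have "(\<Sum>i<Suc k. x i / (x i - z) * cf x (Suc k) i)
      = (\<Sum>i<k. x i / (x i - z) * (cf x k i * ((x i - x k - 1) / (x i - x k)))) + x k / (x k - z) * GG x k (x k)"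
    by (simp add: cf_Suc cf_Suc_last ac_simps)
  also have "(\<Sum>i<k. x i / (x i - z) * (cf x k i * ((x i - x k - 1) / (x i - x k))))
      = (\<Sum>i<k. x i / (x i - z) * cf x k i - (x i / (x i - z) * cf x k i - x i / (x i - x k) * cf x k i) / (z - x k))"
    by (rule sum.cong[OF refl], rule trm, simp)
  also have "\<dots> = ?L z - (?L z - ?L (x k)) / (z - x k)"
    by (simp add: sum_subtractf sum_divide_distrib[symmetric])
  finally have "(\<Sum>i<Suc k. x i / (x i - z) * cf x (Suc k) i)
      = ?L z - (?L z - ?L (x k)) / (z - x k) + x k / (x k - z) * GG x k (x k)" .
  also have "\<dots> = z * GG x (Suc k) z - z + real (Suc k)"
  proof -
    have c': "z - x k \<noteq> 0" using zxk by simp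
    have c'': "x k - z \<noteq> 0" using zxk by simp
    have g: "GG x (Suc k) z = GG x k z * ((z - x k - 1) / (z - x k))" by (simp add: GG_def)
    show ?thesis unfolding IH1 IH2 g using c' c''
      by (simp add: field_simps)
  qed
  finally show ?case .
qed

lemma P_identity:
  assumes "inj_on x {..<k}"
  shows "(\<Sum>i<k. x i * cf x k i) = (\<Sum>i<k. x i) - real k * (real k - 1) / 2"
  using assms
proof (induction k)
  case 0
  then show ?case by simp
next
  case (Suc k)
  have inj: "inj_on x {..<k}" using Suc.prems(1) by (simp add: inj_on_subset)
  have xk: "x k \<notin> x ` {..<k}" using Suc.prems(1) by (auto simp: inj_on_def) (metis lessThan_iff less_SucI less_Suc_eq less_irrefl)
  have S: "(\<Sum>i<k. x i / (x i - x k) * cf x k i) = x k * GG x k (x k) - x k + real k"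
    using S_identity[OF inj xk] .
  have trm: "x i * (cf x k i * ((x i - x k - 1) / (x i - x k)))
      = x i * cf x k i - x i / (x i - x k) * cf x k i" if "i < k" for i
  proof -
    have b': "x i - x k \<noteq> 0" using xk that by (metis image_eqI lessThan_iff eq_iff_diff_eq_0)
    show ?thesis using b' by (simp add: field_simps)
  qed
  have "(\<Sum>i<Suc k. x i * cf x (Suc k) i)
     = (\<Sum>i<k. x i * (cf x k i * ((x i - x k - 1) / (x i - x k)))) + x k * GG x k (x k)"
    by (simp add: cf_Suc cf_Suc_last)
  also have "\<dots> = (\<Sum>i<k. x i * cf x k i - x i / (x i - x k) * cf x k i) + x k * GG x k (x k)"
    by (subst sum.cong[OF refl], rule trm, simp_all)
  also have "\<dots> = (\<Sum>i<k. x i * cf x k i) - (\<Sum>i<k. x i / (x i - x k) * cf x k i) + x k * GG x k (x k)"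
    by (simp add: sum_subtractf)
  also have "\<dots> = (\<Sum>i<Suc k. x i) - real (Suc k) * (real (Suc k) - 1) / 2"
    unfolding S Suc.IH[OF inj] by (simp add: field_simps)
  finally show ?case .
qed


definition Delta :: "(nat \<Rightarrow> real) \<Rightarrow> nat \<Rightarrow> real" where
  "Delta x k = (\<Prod>p<k. \<Prod>q<k. if p < q then x p - x q else 1)"

definition lv :: "(nat \<Rightarrow> nat) \<Rightarrow> nat \<Rightarrow> nat \<Rightarrow> nat" where
  "lv a k i = a i + (k - 1 - i)"

definition Fr :: "(nat \<Rightarrow> nat) \<Rightarrow> nat \<Rightarrow> real" where
  "Fr a k = fact (\<Sum>i<k. a i) * Delta (\<lambda>i. real (lv a k i)) k / (\<Prod>i<k. fact (lv a k i))"

lemma Delta_change: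
  assumes inj: "inj_on x {..<k}" and ik: "i < k"
  shows "Delta (x(i := x i - 1)) k = Delta x k * cf x k i"
proof -
  define r where "r j = (x i - x j - 1) / (x i - x j)" for j
  define A where "A p q = (if p = i \<and> i < q then r q else 1)" for p q
  define B where "B p q = (if q = i \<and> p < i then r p else 1)" for p q
  define g where "g p q = (if p < q then x p - x q else 1)" for p q
  have neq: "x p \<noteq> x q" if "p < k" "q < k" "p \<noteq> q" for p q
    using inj that by (auto simp: inj_on_def)
  have pt: "(if p < q then (x(i := x i - 1)) p - (x(i := x i - 1)) q else 1) = g p q * (A p q * B p q)"
    if "p < k" "q < k" for p q
  proof -
    consider "p < q" "p = i" | "p < q" "q = i" | "p < q" "p \<noteq> i" "q \<noteq> i" | "\<not> p < q" by linarith
    then show ?thesis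
    proof cases
      case 1
      have "x i - x q \<noteq> 0" using neq[of i q] that 1 by auto
      then show ?thesis using 1 by (simp add: g_def A_def B_def r_def)
    next
      case 2
      have "x p - x i \<noteq> 0" using neq[of p i] that 2 by auto
      then have "x i - x p \<noteq> 0" by simp
      then show ?thesis using 2 \<open>x p - x i \<noteq> 0\<close> by (simp add: g_def A_def B_def r_def field_simps)
    next
      case 3
      then show ?thesis by (simp add: g_def A_def B_def)
    next
      case 4
      then show ?thesis by (auto simp: g_def A_def B_def)
    qed
  qed
  have "Delta (x(i := x i - 1)) k = (\<Prod>p<k. \<Prod>q<k. g p q * (A p q * B p q))"
    unfolding Delta_def by (rule prod.cong[OF refl], rule prod.cong[OF refl], rule pt, auto)
  also have "\<dots> = Delta x k * ((\<Prod>p<k. \<Prod>q<k. A p q) * (\<Prod>p<k. \<Prod>q<k. B p q))"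
    unfolding Delta_def g_def by (simp add: prod.distrib)
  also have "(\<Prod>p<k. \<Prod>q<k. A p q) = (\<Prod>q<k. if i < q then r q else 1)"
  proof -
    have "(\<Prod>p<k. \<Prod>q<k. A p q) = (\<Prod>p<k. if p = i then (\<Prod>q<k. if i < q then r q else 1) else 1)"
      by (rule prod.cong[OF refl]) (simp add: A_def)
    also have "\<dots> = (\<Prod>q<k. if i < q then r q else 1)" using ik by (simp add: prod.delta)
    finally show ?thesis .
  qed
  also have "(\<Prod>p<k. \<Prod>q<k. B p q) = (\<Prod>p<k. if p < i then r p else 1)"
  proof -
    have "(\<Prod>p<k. \<Prod>q<k. B p q) = (\<Prod>p<k. \<Prod>q<k. if q = i then (if p < i then r p else 1) else 1)"
      by (rule prod.cong[OF refl], rule prod.cong[OF refl]) (simp add: B_def)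
    also have "\<dots> = (\<Prod>p<k. if p < i then r p else 1)" using ik by (simp add: prod.delta)
    finally show ?thesis .
  qed
  also have "(\<Prod>q<k. if i < q then r q else 1) * (\<Prod>p<k. if p < i then r p else 1) = cf x k i"
  proof -
    have "(\<Prod>q<k. if i < q then r q else 1) * (\<Prod>p<k. if p < i then r p else 1)
        = (\<Prod>q<k. if q \<noteq> i then r q else 1)"
      by (simp add: prod.distrib[symmetric]) (rule prod.cong, auto)
    also have "\<dots> = (\<Prod>q\<in>{..<k} - {i}. r q)"
    proof -
      have e: "{..<k} \<inter> {q. q \<noteq> i} = {..<k} - {i}" by auto
      show ?thesis by (simp add: prod.If_cases e)
    qed
    finally show ?thesis unfolding cf_def r_def .
  qed
  finally show ?thesis .
qed

lemma sum_upd_minus1: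
  fixes a :: "nat \<Rightarrow> nat"
  assumes "i < k" "1 \<le> a i"
  shows "(\<Sum>j<k. (a(i := a i - 1)) j) = (\<Sum>j<k. a j) - 1"
    and "1 \<le> (\<Sum>j<k. a j)"
proof -
  have f: "finite {..<k}" by simp
  have i: "i \<in> {..<k}" using assms by simp
  have s1: "(\<Sum>j<k. a j) = a i + (\<Sum>j\<in>{..<k} - {i}. a j)" using sum.remove[OF f i] .
  have s2: "(\<Sum>j<k. (a(i := a i - 1)) j) = (a i - 1) + (\<Sum>j\<in>{..<k} - {i}. a j)"
    using sum.remove[OF f i, of "a(i := a i - 1)"] by simp
  show "(\<Sum>j<k. (a(i := a i - 1)) j) = (\<Sum>j<k. a j) - 1" using s1 s2 assms(2) by simp
  show "1 \<le> (\<Sum>j<k. a j)" using s1 assms(2) by simp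
qed

lemma Fr_ratio:
  assumes inj: "inj_on (lv a k) {..<k}" and ik: "i < k" and ai: "1 \<le> a i"
  shows "Fr (a(i := a i - 1)) k
       = Fr a k * (real (lv a k i) * cf (\<lambda>j. real (lv a k j)) k i) / real (\<Sum>j<k. a j)"
proof -
  define a' where "a' = a(i := a i - 1)"
  define N where "N = (\<Sum>j<k. a j)"
  define x where "x j = real (lv a k j)" for j
  have N1: "1 \<le> N" using sum_upd_minus1[of i k a, OF ik ai] N_def by simp
  have sN: "(\<Sum>j<k. a' j) = N - 1" using sum_upd_minus1[of i k a, OF ik ai] N_def a'_def by simp
  have li: "1 \<le> lv a k i" using ai by (simp add: lv_def)
  have lv': "lv a' k = (lv a k)(i := lv a k i - 1)"
    using ai by (auto simp: lv_def fun_eq_iff a'_def)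
  have x': "(\<lambda>j. real (lv a' k j)) = x(i := x i - 1)"
    unfolding lv' using li by (auto simp: x_def fun_eq_iff of_nat_diff)
  have injx: "inj_on x {..<k}" using inj by (auto simp: inj_on_def x_def)
  have D: "Delta (\<lambda>j. real (lv a' k j)) k = Delta x k * cf x k i"
    unfolding x' using Delta_change[OF injx ik] .
  have f: "finite {..<k}" by simp
  have iin: "i \<in> {..<k}" using ik by simp
  have P: "(\<Prod>j<k. fact (lv a' k j) :: real) * real (lv a k i) = (\<Prod>j<k. fact (lv a k j))"
  proof -
    have r: "(\<Prod>j\<in>{..<k} - {i}. fact (lv a' k j) :: real) = (\<Prod>j\<in>{..<k} - {i}. fact (lv a k j))"
      by (rule prod.cong) (auto simp: lv')
    have "(\<Prod>j<k. fact (lv a' k j) :: real)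
        = fact (lv a k i - 1) * (\<Prod>j\<in>{..<k} - {i}. fact (lv a k j))"
      using prod.remove[OF f iin, of "\<lambda>j. fact (lv a' k j) :: real"] unfolding r by (simp add: lv')
    moreover have "(\<Prod>j<k. fact (lv a k j) :: real) = fact (lv a k i) * (\<Prod>j\<in>{..<k} - {i}. fact (lv a k j))"
      using prod.remove[OF f iin] .
    moreover have "(fact (lv a k i) :: real) = real (lv a k i) * fact (lv a k i - 1)"
      using li by (metis Suc_diff_1 fact_Suc less_le_trans not_le of_nat_fact of_nat_mult zero_less_one le_numeral_extra(2))
    ultimately show ?thesis by (simp add: ac_simps)
  qed
  have FN: "(fact N :: real) = real N * fact (N - 1)"
    using N1 by (metis Suc_diff_1 fact_Suc le_numeral_extra(2) less_le_trans not_le of_nat_fact of_nat_mult zero_less_one)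
  have lpos: "real (lv a k i) \<noteq> 0" using li by simp
  have "Fr a' k = fact (N - 1) * (Delta x k * cf x k i) / (\<Prod>j<k. fact (lv a' k j))"
    unfolding Fr_def sN D ..
  also have "\<dots> = fact (N - 1) * (Delta x k * cf x k i) * real (lv a k i) / (\<Prod>j<k. fact (lv a k j))"
    unfolding P[symmetric] using lpos by (simp add: field_simps)
  also have "\<dots> = Fr a k * (real (lv a k i) * cf x k i) / real N"
    unfolding Fr_def N_def[symmetric] x_def[symmetric] FN using N1 by (simp add: field_simps)
  finally show ?thesis unfolding N_def x_def a'_def .
qed

definition dec :: "(nat \<Rightarrow> nat) \<Rightarrow> nat \<Rightarrow> bool" where
  "dec a k \<longleftrightarrow> (\<forall>p q. p \<le> q \<longrightarrow> q < k \<longrightarrow> a q \<le> a p)"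

lemma lv_strict: "dec a k \<Longrightarrow> p < q \<Longrightarrow> q < k \<Longrightarrow> lv a k q < lv a k p"
proof -
  assume d: "dec a k" and pq: "p < q" and qk: "q < k"
  have "a q \<le> a p" using d pq qk unfolding dec_def by simp
  moreover have "k - 1 - q < k - 1 - p" using pq qk by arith
  ultimately show ?thesis unfolding lv_def by simp
qed

lemma lv_inj: "dec a k \<Longrightarrow> inj_on (lv a k) {..<k}"
  unfolding inj_on_def by (metis lessThan_iff linorder_neqE_nat lv_strict less_irrefl)

lemma Delta_pos:
  assumes "\<And>p q. p < q \<Longrightarrow> q < k \<Longrightarrow> x q < x p"
  shows "Delta x k > 0"
  unfolding Delta_def using assms by (intro prod_pos) auto

lemma Fr_pos: "dec a k \<Longrightarrow> Fr a k > 0"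
  unfolding Fr_def by (intro divide_pos_pos mult_pos_pos Delta_pos) (auto simp: lv_strict intro: prod_pos)

lemma prod_shift_fact: "(\<Prod>q<k. if p < q then real q - real p else 1) = fact (k - 1 - p)"
proof (induction k)
  case 0
  then show ?case by simp
next
  case (Suc k)
  show ?case
  proof (cases "p < k")
    case True
    then have "k - p = Suc (k - 1 - p)" by simp
    then have "(fact (Suc k - 1 - p) :: real) = real (k - p) * fact (k - 1 - p)"
      by (metis diff_Suc_1 fact_Suc of_nat_fact of_nat_mult)
    then show ?thesis using Suc True by (simp add: of_nat_diff)
  next
    case False
    then show ?thesis using Suc by simp
  qed
qed

lemma Fr_zero:
  assumes "\<And>i. i < k \<Longrightarrow> a i = 0"
  shows "Fr a k = 1"
proof -
  have s: "(\<Sum>i<k. a i) = 0" using assms by simp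
  have l: "lv a k i = k - 1 - i" if "i < k" for i using assms that by (simp add: lv_def)
  have "Delta (\<lambda>i. real (lv a k i)) k = (\<Prod>p<k. \<Prod>q<k. if p < q then real q - real p else 1) * 1"
    unfolding Delta_def
  proof (simp, rule prod.cong[OF refl], rule prod.cong[OF refl])
    fix p q assume "p \<in> {..<k}" "q \<in> {..<k}"
    then show "(if p < q then real (lv a k p) - real (lv a k q) else 1) = (if p < q then real q - real p else 1)"
      using l by (auto simp: of_nat_diff)
  qed
  also have "\<dots> = (\<Prod>p<k. fact (lv a k p))"
    by (simp add: prod_shift_fact) (rule prod.cong, auto simp: l)
  finally show ?thesis unfolding Fr_def s by simp
qed


definition sytD :: "(nat \<times> nat) set \<Rightarrow> (nat \<times> nat \<Rightarrow> nat) set" where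
  "sytD D = {T. bij_betw T D {1..card D}
              \<and> (\<forall>c. c \<notin> D \<longrightarrow> T c = 0)
              \<and> (\<forall>i j. (i, j) \<in> D \<and> (i, j + 1) \<in> D \<longrightarrow> T (i, j) < T (i, j + 1))
              \<and> (\<forall>i j. (i, j) \<in> D \<and> (i + 1, j) \<in> D \<longrightarrow> T (i, j) < T (i + 1, j))}"

definition corner :: "(nat \<times> nat) set \<Rightarrow> nat \<times> nat \<Rightarrow> bool" where
  "corner D c \<longleftrightarrow> c \<in> D \<and> (fst c, snd c + 1) \<notin> D \<and> (fst c + 1, snd c) \<notin> D"

lemma finite_sytD:
  assumes "finite D"
  shows "finite (sytD D)"
proof -
  have inj: "inj_on (\<lambda>T. restrict T D) (sytD D)"
  proof (rule inj_onI)
    fix S T assume S: "S \<in> sytD D" and T: "T \<in> sytD D" and e: "restrict S D = restrict T D"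
    show "S = T"
    proof
      fix c show "S c = T c"
      proof (cases "c \<in> D")
        case True
        then show ?thesis using fun_cong[OF e, of c] by simp
      next
        case False
        have "\<forall>c. c \<notin> D \<longrightarrow> S c = 0" "\<forall>c. c \<notin> D \<longrightarrow> T c = 0" using S T unfolding sytD_def by blast+
        then show ?thesis using False by metis
      qed
    qed
  qed
  have "(\<lambda>T. restrict T D) ` sytD D \<subseteq> PiE D (\<lambda>_. {1..card D})"
    unfolding sytD_def bij_betw_def by auto
  moreover have "finite (PiE D (\<lambda>_. {1..card D}))" using assms by (intro finite_PiE) auto
  ultimately have "finite ((\<lambda>T. restrict T D) ` sytD D)" by (rule finite_subset)
  then show ?thesis using inj by (rule finite_imageD)
qed

lemma sytD_max_corner:
  assumes "finite D" "D \<noteq> {}" "T \<in> sytD D"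
  shows "\<exists>c. corner D c \<and> T c = card D"
proof -
  have bij: "bij_betw T D {1..card D}" using assms(3) unfolding sytD_def by simp
  have "card D \<in> {1..card D}" using assms(1,2) by (simp add: Suc_leI card_gt_0_iff)
  then obtain c where c: "c \<in> D" "T c = card D" using bij unfolding bij_betw_def by (metis imageE)
  have le: "T d \<le> card D" if "d \<in> D" for d using bij that unfolding bij_betw_def by auto
  obtain i j where ij: "c = (i, j)" by fastforce
  have "(i, j + 1) \<notin> D"
  proof
    assume h: "(i, j + 1) \<in> D"
    have "\<forall>i j. (i, j) \<in> D \<and> (i, j + 1) \<in> D \<longrightarrow> T (i, j) < T (i, j + 1)" using assms(3) unfolding sytD_def by blast
    then have "T (i, j) < T (i, j + 1)" using h c ij by blast
    then show False using le[OF h] c ij by simp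
  qed
  moreover have "(i + 1, j) \<notin> D"
  proof
    assume h: "(i + 1, j) \<in> D"
    have "\<forall>i j. (i, j) \<in> D \<and> (i + 1, j) \<in> D \<longrightarrow> T (i, j) < T (i + 1, j)" using assms(3) unfolding sytD_def by blast
    then have "T (i, j) < T (i + 1, j)" using h c ij by blast
    then show False using le[OF h] c ij by simp
  qed
  ultimately show ?thesis using c ij unfolding corner_def by auto
qed

lemma sytD_iff:
  "T \<in> sytD D \<longleftrightarrow> bij_betw T D {1..card D}
              \<and> (\<forall>c. c \<notin> D \<longrightarrow> T c = 0)
              \<and> (\<forall>i j. (i, j) \<in> D \<and> (i, j + 1) \<in> D \<longrightarrow> T (i, j) < T (i, j + 1))
              \<and> (\<forall>i j. (i, j) \<in> D \<and> (i + 1, j) \<in> D \<longrightarrow> T (i, j) < T (i + 1, j))"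
  unfolding sytD_def by (rule mem_Collect_eq)

lemma sytD_zero: "T \<in> sytD D \<Longrightarrow> d \<notin> D \<Longrightarrow> T d = 0"
  unfolding sytD_def by blast

lemma sytD_bij: "T \<in> sytD D \<Longrightarrow> bij_betw T D {1..card D}"
  unfolding sytD_def by blast

lemma sytD_row: "T \<in> sytD D \<Longrightarrow> (i, j) \<in> D \<Longrightarrow> (i, j + 1) \<in> D \<Longrightarrow> T (i, j) < T (i, j + 1)"
  unfolding sytD_def by blast

lemma sytD_col: "T \<in> sytD D \<Longrightarrow> (i, j) \<in> D \<Longrightarrow> (i + 1, j) \<in> D \<Longrightarrow> T (i, j) < T (i + 1, j)"
  unfolding sytD_def by blast

lemma sytD_intro:
  assumes "bij_betw T D {1..card D}" "\<And>d. d \<notin> D \<Longrightarrow> T d = 0"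
    "\<And>i j. (i, j) \<in> D \<Longrightarrow> (i, j + 1) \<in> D \<Longrightarrow> T (i, j) < T (i, j + 1)"
    "\<And>i j. (i, j) \<in> D \<Longrightarrow> (i + 1, j) \<in> D \<Longrightarrow> T (i, j) < T (i + 1, j)"
  shows "T \<in> sytD D"
  unfolding sytD_def using assms by blast

lemma sytD_remove:
  assumes fin: "finite D" and cor: "corner D c"
  shows "bij_betw (\<lambda>T. T(c := 0)) {T \<in> sytD D. T c = card D} (sytD (D - {c}))"
proof -
  define N where "N = card D"
  have cD: "c \<in> D" using cor unfolding corner_def by simp
  have cardm: "card (D - {c}) = N - 1" using fin cD N_def by simp
  have "card D > 0" using fin cD card_gt_0_iff by blast
  then have N1: "1 \<le> N" unfolding N_def by simp
  have c1: "(fst c, snd c + 1) \<notin> D" and c2: "(fst c + 1, snd c) \<notin> D" using cor unfolding corner_def by auto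
  show ?thesis
  proof (rule bij_betw_byWitness[where f' = "\<lambda>T. T(c := N)"])
    show "\<forall>T\<in>{T \<in> sytD D. T c = card D}. (T(c := 0))(c := N) = T"
    proof
      fix T assume "T \<in> {T \<in> sytD D. T c = card D}"
      then have "T c = N" unfolding N_def by blast
      then show "(T(c := 0))(c := N) = T" by (simp add: fun_upd_idem)
    qed
    show "\<forall>T\<in>sytD (D - {c}). (T(c := N))(c := 0) = T"
    proof
      fix T assume "T \<in> sytD (D - {c})"
      then have "T c = 0" by (rule sytD_zero) simp
      then show "(T(c := N))(c := 0) = T" by (simp add: fun_upd_idem)
    qed
    show "(\<lambda>T. T(c := 0)) ` {T \<in> sytD D. T c = card D} \<subseteq> sytD (D - {c})"
    proof
      fix T' assume "T' \<in> (\<lambda>T. T(c := 0)) ` {T \<in> sytD D. T c = card D}"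
      then obtain T where T: "T \<in> sytD D" "T c = N" and T': "T' = T(c := 0)" unfolding N_def by blast
      have bij: "bij_betw T D {1..N}" using sytD_bij[OF T(1)] unfolding N_def .
      have bc: "bij_betw T {c} {N}" using T(2) by (simp add: bij_betw_def)
      have "bij_betw T (D - {c}) ({1..N} - {N})"
        by (rule bij_betw_DiffI[OF bij bc]) (use cD N1 in auto)
      moreover have "{1..N} - {N} = {1..N - 1}" using N1 by auto
      ultimately have b0: "bij_betw T (D - {c}) {1..card (D - {c})}" unfolding cardm by simp
      have eq: "\<And>d. d \<in> D - {c} \<Longrightarrow> T' d = T d" unfolding T' by simp
      show "T' \<in> sytD (D - {c})"
      proof (rule sytD_intro)
        show "bij_betw T' (D - {c}) {1..card (D - {c})}" using b0 bij_betw_cong[of "D - {c}" T' T] eq by blast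
        show "T' d = 0" if "d \<notin> D - {c}" for d
          using that sytD_zero[OF T(1), of d] unfolding T' by (cases "d = c") auto
        show "T' (i, j) < T' (i, j + 1)" if "(i, j) \<in> D - {c}" "(i, j + 1) \<in> D - {c}" for i j
          using that sytD_row[OF T(1), of i j] eq by simp
        show "T' (i, j) < T' (i + 1, j)" if "(i, j) \<in> D - {c}" "(i + 1, j) \<in> D - {c}" for i j
          using that sytD_col[OF T(1), of i j] eq by simp
      qed
    qed
    show "(\<lambda>T. T(c := N)) ` sytD (D - {c}) \<subseteq> {T \<in> sytD D. T c = card D}"
    proof
      fix T' assume "T' \<in> (\<lambda>T. T(c := N)) ` sytD (D - {c})"
      then obtain T where T: "T \<in> sytD (D - {c})" and T': "T' = T(c := N)" by blast
      have bij: "bij_betw T (D - {c}) {1..N - 1}" using sytD_bij[OF T] unfolding cardm .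
      have eq: "\<And>d. d \<in> D - {c} \<Longrightarrow> T' d = T d" unfolding T' by simp
      have b1: "bij_betw T' (D - {c}) {1..N - 1}"
        using bij bij_betw_cong[of "D - {c}" T' T] eq by blast
      have b2: "bij_betw T' {c} {N}" unfolding T' by (simp add: bij_betw_def)
      have "bij_betw T' ((D - {c}) \<union> {c}) ({1..N - 1} \<union> {N})"
        by (rule bij_betw_combine[OF b1 b2]) auto
      moreover have "(D - {c}) \<union> {c} = D" using cD by auto
      moreover have "{1..N - 1} \<union> {N} = {1..N}" using N1 by auto
      ultimately have bijD: "bij_betw T' D {1..card D}" unfolding N_def by simp
      have lt: "T d < N" if "d \<in> D - {c}" for d
      proof -
        have "T d \<in> {1..N - 1}" using bij that unfolding bij_betw_def by blast
        then show ?thesis using N1 by auto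
      qed
      have Tc: "T' c = card D" unfolding T' N_def by simp
      have "T' \<in> sytD D"
      proof (rule sytD_intro[OF bijD])
        show "T' d = 0" if "d \<notin> D" for d
          using that sytD_zero[OF T, of d] cD unfolding T' by (cases "d = c") auto
        show "T' (i, j) < T' (i, j + 1)" if "(i, j) \<in> D" "(i, j + 1) \<in> D" for i j
        proof (cases "(i, j + 1) = c")
          case True
          then have "(i, j) \<noteq> c" by auto
          then show ?thesis using True lt[of "(i, j)"] that unfolding T' by simp
        next
          case False
          have "(i, j) \<noteq> c" using c1 False that by auto
          then show ?thesis using False sytD_row[OF T, of i j] that unfolding T' by simp
        qed
        show "T' (i, j) < T' (i + 1, j)" if "(i, j) \<in> D" "(i + 1, j) \<in> D" for i j
        proof (cases "(i + 1, j) = c")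
          case True
          then have "(i, j) \<noteq> c" by auto
          then show ?thesis using True lt[of "(i, j)"] that unfolding T' by simp
        next
          case False
          have "(i, j) \<noteq> c" using c2 False that by auto
          then show ?thesis using False sytD_col[OF T, of i j] that unfolding T' by simp
        qed
      qed
      then show "T' \<in> {T \<in> sytD D. T c = card D}" using Tc by simp
    qed
  qed
qed

lemma sytD_branch:
  assumes fin: "finite D" and ne: "D \<noteq> {}"
  shows "card (sytD D) = (\<Sum>c\<in>{c. corner D c}. card (sytD (D - {c})))"
proof -
  have cf: "finite {c. corner D c}" using fin by (rule finite_subset[rotated]) (auto simp: corner_def)
  have eq: "sytD D = (\<Union>c\<in>{c. corner D c}. {T \<in> sytD D. T c = card D})"
    using sytD_max_corner[OF fin ne] by auto
  have inj: "T c = card D \<Longrightarrow> T d = card D \<Longrightarrow> T \<in> sytD D \<Longrightarrow> c \<in> D \<Longrightarrow> d \<in> D \<Longrightarrow> c = d" for T c d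
    unfolding sytD_def bij_betw_def inj_on_def by auto
  have "card (sytD D) = (\<Sum>c\<in>{c. corner D c}. card {T \<in> sytD D. T c = card D})"
    apply (subst eq)
    apply (rule card_UN_disjoint[OF cf])
    using finite_sytD[OF fin] apply simp
    using inj unfolding corner_def by blast
  also have "\<dots> = (\<Sum>c\<in>{c. corner D c}. card (sytD (D - {c})))"
    by (rule sum.cong[OF refl]) (use sytD_remove[OF fin] bij_betw_same_card in blast)
  finally show ?thesis .
qed


definition dia :: "(nat \<Rightarrow> nat) \<Rightarrow> nat \<Rightarrow> (nat \<times> nat) set" where
  "dia a k = {(i, j). 1 \<le> i \<and> i \<le> k \<and> 1 \<le> j \<and> j \<le> a (i - 1)}"

lemma dia_eq_Union: "dia a k = (\<Union>i<k. {(i + 1, j) | j. j \<in> {1..a i}})"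
proof (intro set_eqI iffI)
  fix c assume cd: "c \<in> dia a k"
  obtain i j where c: "c = (i, j)" by (cases c)
  have h: "1 \<le> i" "i \<le> k" "1 \<le> j" "j \<le> a (i - 1)" using cd unfolding c dia_def by simp_all
  have "c \<in> {((i - 1) + 1, j') | j'. j' \<in> {1..a (i - 1)}}" using h c by simp
  moreover have "i - 1 \<in> {..<k}" using h by simp
  ultimately show "c \<in> (\<Union>i<k. {(i + 1, j) | j. j \<in> {1..a i}})" by (rule UN_I[rotated])
next
  fix c assume "c \<in> (\<Union>i<k. {(i + 1, j) | j. j \<in> {1..a i}})"
  then obtain i j where "i < k" "c = (i + 1, j)" "j \<in> {1..a i}" by blast
  then show "c \<in> dia a k" unfolding dia_def by simp
qed

lemma finite_dia: "finite (dia a k)"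
  unfolding dia_eq_Union by auto

lemma card_dia: "card (dia a k) = (\<Sum>i<k. a i)"
proof -
  have "card (\<Union>i<k. {(i + 1, j) | j. j \<in> {1..a i}}) = (\<Sum>i<k. card {(i + 1, j) | j. j \<in> {1..a i}})"
    by (rule card_UN_disjoint) auto
  also have "\<dots> = (\<Sum>i<k. a i)"
  proof (rule sum.cong[OF refl])
    fix i
    have "{(i + 1, j) | j. j \<in> {1..a i}} = Pair (i + 1) ` {1..a i}" by auto
    then show "card {(i + 1, j) | j. j \<in> {1..a i}} = a i" by (simp add: card_image inj_on_def)
  qed
  finally show ?thesis unfolding dia_eq_Union .
qed

definition isc :: "(nat \<Rightarrow> nat) \<Rightarrow> nat \<Rightarrow> nat \<Rightarrow> bool" where
  "isc a k i \<longleftrightarrow> i < k \<and> 0 < a i \<and> (i + 1 = k \<or> a (i + 1) < a i)"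

lemma corner_dia:
  assumes "dec a k"
  shows "{c. corner (dia a k) c} = (\<lambda>i. (i + 1, a i)) ` {i. isc a k i}"
proof (intro set_eqI iffI)
  fix c assume "c \<in> {c. corner (dia a k) c}"
  then have cor: "corner (dia a k) c" by simp
  obtain p j where c: "c = (p, j)" by fastforce
  have pj: "1 \<le> p" "p \<le> k" "1 \<le> j" "j \<le> a (p - 1)" using cor c unfolding corner_def dia_def by auto
  have r: "(p, j + 1) \<notin> dia a k" "(p + 1, j) \<notin> dia a k" using cor c unfolding corner_def by auto
  have ja: "j = a (p - 1)" using r(1) pj unfolding dia_def by auto
  have "p = k \<or> a p < a (p - 1)" using r(2) pj ja unfolding dia_def by auto
  then have "isc a k (p - 1)" using pj ja unfolding isc_def by auto
  moreover have "c = ((p - 1) + 1, a (p - 1))" using c ja pj by simp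
  ultimately show "c \<in> (\<lambda>i. (i + 1, a i)) ` {i. isc a k i}" by blast
next
  fix c assume "c \<in> (\<lambda>i. (i + 1, a i)) ` {i. isc a k i}"
  then obtain i where i: "isc a k i" and c: "c = (i + 1, a i)" by auto
  have "c \<in> dia a k" using i c unfolding isc_def dia_def by auto
  moreover have "(i + 1, a i + 1) \<notin> dia a k" unfolding dia_def by auto
  moreover have "(i + 2, a i) \<notin> dia a k" using i unfolding isc_def dia_def by auto
  ultimately show "c \<in> {c. corner (dia a k) c}" using c unfolding corner_def by auto
qed

lemma dia_remove:
  assumes "i < k" "0 < a i"
  shows "dia a k - {(i + 1, a i)} = dia (a(i := a i - 1)) k"
  using assms unfolding dia_def by (auto split: if_splits)

lemma dec_remove:
  assumes "dec a k" "isc a k i"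
  shows "dec (a(i := a i - 1)) k"
  unfolding dec_def
proof (intro allI impI)
  fix p q assume pq: "p \<le> q" and qk: "q < k"
  have d: "\<And>p q. p \<le> q \<Longrightarrow> q < k \<Longrightarrow> a q \<le> a p" using assms(1) unfolding dec_def by blast
  have c: "i < k" "0 < a i" "i + 1 = k \<or> a (i + 1) < a i" using assms(2) unfolding isc_def by auto
  show "(a(i := a i - 1)) q \<le> (a(i := a i - 1)) p"
  proof (cases "q = i")
    case True
    then show ?thesis using d[OF pq qk] by auto
  next
    case False
    show ?thesis
    proof (cases "p = i")
      case True
      then have "i + 1 \<le> q" using pq False by simp
      then have "i + 1 < k" "a q \<le> a (i + 1)" using d qk by auto
      then show ?thesis using True False c by auto
    next
      case False
      then show ?thesis using \<open>q \<noteq> i\<close> d[OF pq qk] by simp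
    qed
  qed
qed

lemma sum_rev_real: "(\<Sum>i<k. real (k - 1 - i)) = real k * (real k - 1) / 2"
proof (induction k)
  case 0 then show ?case by simp
next
  case (Suc k)
  have "(\<Sum>i<Suc k. real (Suc k - 1 - i)) = real (Suc k - 1 - 0) + (\<Sum>i<k. real (Suc k - 1 - Suc i))"
    by (rule sum.lessThan_Suc_shift)
  also have "\<dots> = real k + (\<Sum>i<k. real (k - 1 - i))" by simp
  finally have "(\<Sum>i<Suc k. real (Suc k - 1 - i)) = real k + (\<Sum>i<k. real (k - 1 - i))" .
  then show ?case using Suc by (simp add: field_simps)
qed

lemma R_zero:
  assumes "dec a k" "i < k" "\<not> isc a k i"
  shows "real (lv a k i) * cf (\<lambda>j. real (lv a k j)) k i = 0"
proof -
  have "(i + 1 = k \<and> a i = 0) \<or> (i + 1 < k \<and> a (i + 1) = a i)"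
  proof (cases "i + 1 = k")
    case True
    then show ?thesis using assms(2,3) unfolding isc_def by auto
  next
    case False
    then have ik: "i + 1 < k" using assms(2) by simp
    then have "a (i + 1) \<le> a i" using assms(1) unfolding dec_def by simp
    moreover have "\<not> a (i + 1) < a i \<or> a i = 0" using assms(2,3) False unfolding isc_def by auto
    ultimately show ?thesis using ik by auto
  qed
  then show ?thesis
  proof
    assume "i + 1 = k \<and> a i = 0"
    then show ?thesis by (simp add: lv_def)
  next
    assume h: "i + 1 < k \<and> a (i + 1) = a i"
    have "lv a k (i + 1) + 1 = lv a k i" using h unfolding lv_def by (simp, arith)
    then have "real (lv a k i) - real (lv a k (i + 1)) - 1 = 0" by linarith
    moreover have "i + 1 \<in> {..<k} - {i}" using h by simp
    ultimately have "cf (\<lambda>j. real (lv a k j)) k i = 0"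
      unfolding cf_def by (intro prod_zero) (auto intro!: bexI[of _ "i + 1"])
    then show ?thesis by simp
  qed
qed

theorem syt_formula:
  assumes "dec a k"
  shows "real (card (sytD (dia a k))) = Fr a k"
  using assms
proof (induction "\<Sum>i<k. a i" arbitrary: a rule: less_induct)
  case less
  define N where "N = (\<Sum>i<k. a i)"
  show ?case
  proof (cases "N = 0")
    case True
    then have z: "\<And>i. i < k \<Longrightarrow> a i = 0" unfolding N_def by simp
    have "dia a k = {}" using z unfolding dia_def by auto
    moreover have "sytD {} = {\<lambda>_. 0}" unfolding sytD_def by (auto simp: bij_betw_def)
    ultimately show ?thesis using Fr_zero[of k a] z by simp
  next
    case False
    have ne: "dia a k \<noteq> {}" using False card_dia[of a k] N_def by auto
    have injc: "inj_on (\<lambda>i. (i + 1, a i)) {i. isc a k i}" by (auto simp: inj_on_def)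
    have finI: "finite {i. isc a k i}" by (rule finite_subset[of _ "{..<k}"]) (auto simp: isc_def)
    define R where "R i = real (lv a k i) * cf (\<lambda>j. real (lv a k j)) k i" for i
    have "real (card (sytD (dia a k))) = (\<Sum>c\<in>{c. corner (dia a k) c}. real (card (sytD (dia a k - {c}))))"
      using sytD_branch[OF finite_dia ne] by simp
    also have "\<dots> = (\<Sum>i\<in>{i. isc a k i}. real (card (sytD (dia a k - {(i + 1, a i)}))))"
      unfolding corner_dia[OF less.prems] by (subst sum.reindex[OF injc]) (simp add: comp_def)
    also have "\<dots> = (\<Sum>i\<in>{i. isc a k i}. Fr a k * R i / real N)"
    proof (rule sum.cong[OF refl])
      fix i assume "i \<in> {i. isc a k i}"
      then have i: "isc a k i" by simp
      have ik: "i < k" and ai: "1 \<le> a i" using i unfolding isc_def by auto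
      have "(\<Sum>j<k. (a(i := a i - 1)) j) < (\<Sum>j<k. a j)"
        using sum_upd_minus1[of i k a, OF ik ai] by simp
      then have "real (card (sytD (dia (a(i := a i - 1)) k))) = Fr (a(i := a i - 1)) k"
        using less.hyps dec_remove[OF less.prems i] by blast
      also have "\<dots> = Fr a k * R i / real N"
        unfolding R_def N_def by (rule Fr_ratio[OF lv_inj[OF less.prems] ik ai])
      finally show "real (card (sytD (dia a k - {(i + 1, a i)}))) = Fr a k * R i / real N"
        using dia_remove[of i k a] ik ai by simp
    qed
    also have "\<dots> = Fr a k / real N * (\<Sum>i\<in>{i. isc a k i}. R i)"
      by (simp add: sum_distrib_left)
    also have "(\<Sum>i\<in>{i. isc a k i}. R i) = (\<Sum>i<k. R i)"
    proof (rule sum.mono_neutral_left)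
      show "\<forall>i\<in>{..<k} - {i. isc a k i}. R i = 0"
        using R_zero[OF less.prems] unfolding R_def by auto
    qed (auto simp: isc_def)
    also have "(\<Sum>i<k. R i) = real N"
    proof -
      have "(\<Sum>i<k. R i) = (\<Sum>i<k. real (lv a k i)) - real k * (real k - 1) / 2"
        unfolding R_def using P_identity[of "\<lambda>j. real (lv a k j)" k] lv_inj[OF less.prems]
        by (simp add: inj_on_def)
      also have "(\<Sum>i<k. real (lv a k i)) = real N + real k * (real k - 1) / 2"
        unfolding lv_def of_nat_add sum.distrib sum_rev_real N_def of_nat_sum ..
      finally show ?thesis by simp
    qed
    finally show ?thesis using False by simp
  qed
qed


definition ext :: "nat list \<Rightarrow> nat \<Rightarrow> nat" where
  "ext mu i = (if i < length mu then mu ! i else 0)"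

lemma young_dia:
  assumes "length mu \<le> k"
  shows "young mu = dia (ext mu) k"
  using assms unfolding young_def dia_def ext_def by (auto split: if_splits)

lemma psize_ext:
  assumes "length mu \<le> k"
  shows "psize mu = (\<Sum>i<k. ext mu i)"
proof -
  have "psize mu = (\<Sum>i<length mu. mu ! i)"
    unfolding psize_def by (simp add: sum_list_sum_nth atLeast0LessThan)
  also have "\<dots> = (\<Sum>i<length mu. ext mu i)" by (simp add: ext_def)
  also have "\<dots> = (\<Sum>i<k. ext mu i)"
    by (rule sum.mono_neutral_left) (use assms in \<open>auto simp: ext_def\<close>)
  finally show ?thesis .
qed

lemma psize_card: "psize mu = card (young mu)"
  using psize_ext[of mu "length mu"] young_dia[of mu "length mu"] card_dia by simp

lemma num_syt_sytD: "num_syt mu = card (sytD (young mu))"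
  unfolding num_syt_def syt_def sytD_def psize_card ..

lemma dec_ext:
  assumes "is_partition mu"
  shows "dec (ext mu) k"
  unfolding dec_def
proof (intro allI impI)
  fix p q assume pq: "p \<le> q" "q < k"
  show "ext mu q \<le> ext mu p"
  proof (cases "q < length mu")
    case True
    have s: "sorted_wrt (\<ge>) mu" using assms unfolding is_partition_def by simp
    show ?thesis
    proof (cases "p = q")
      case False
      then have pq': "p < q" using pq by simp
      show ?thesis using sorted_wrt_nth_less[OF s pq' True] True pq' unfolding ext_def by simp
    qed simp
  next
    case False
    then show ?thesis unfolding ext_def by simp
  qed
qed

lemma num_syt_dia:
  assumes "young nu = dia b k" "dec b k"
  shows "real (num_syt nu) = Fr b k"
  unfolding num_syt_sytD assms(1) using syt_formula[OF assms(2)] .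

lemma dia_cong: "(\<And>i. i < k \<Longrightarrow> a i = b i) \<Longrightarrow> dia a k = dia b k"
  unfolding dia_def by force

lemma partition_exists:
  assumes "dec b k"
  shows "\<exists>nu. is_partition nu \<and> young nu = dia b k"
proof -
  define xs where "xs = map b [0..<k]"
  define nu where "nu = takeWhile (\<lambda>x. 0 < x) xs"
  have sx: "sorted_wrt (\<ge>) xs"
  proof (unfold sorted_wrt_iff_nth_less, intro allI impI)
    fix i j assume ij: "i < j" "j < length xs"
    then have "j < k" unfolding xs_def by simp
    then have "b j \<le> b i" using assms ij unfolding dec_def by simp
    then show "xs ! j \<le> xs ! i" using ij \<open>j < k\<close> unfolding xs_def by simp
  qed
  have nt: "nu = take (length nu) xs" unfolding nu_def by (rule takeWhile_eq_take)
  have "sorted_wrt (\<ge>) nu"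
    by (subst nt) (rule sorted_wrt_take[OF sx])
  moreover have "\<forall>x\<in>set nu. 0 < x" unfolding nu_def by (auto dest: set_takeWhileD)
  ultimately have part: "is_partition nu" unfolding is_partition_def by simp
  have lx: "length xs = k" unfolding xs_def by simp
  have len: "length nu \<le> k" unfolding nu_def using length_takeWhile_le[of "\<lambda>x. 0 < x" xs] lx by simp
  have agree: "ext nu i = b i" if "i < k" for i
  proof (cases "i < length nu")
    case True
    have "nu ! i = xs ! i" using True unfolding nu_def by (rule takeWhile_nth)
    then show ?thesis using True that unfolding ext_def xs_def by simp
  next
    case False
    have lk: "length nu < length xs" using False that len unfolding xs_def by simp
    have "\<not> 0 < xs ! length nu" using lk unfolding nu_def by (rule nth_length_takeWhile)
    then have "b (length nu) = 0" using lk unfolding xs_def by simp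
    moreover have "b i \<le> b (length nu)" using assms False that unfolding dec_def by simp
    ultimately show ?thesis using False unfolding ext_def by simp
  qed
  have "young nu = dia b k" unfolding young_dia[OF len] by (rule dia_cong) (rule agree)
  then show ?thesis using part by blast
qed

lemma young_first_col:
  assumes "is_partition mu"
  shows "(i, 1) \<in> young mu \<longleftrightarrow> 1 \<le> i \<and> i \<le> length mu"
proof -
  have pos: "\<And>i. i < length mu \<Longrightarrow> 0 < mu ! i" using assms unfolding is_partition_def by auto
  show ?thesis
  proof
    assume "(i, 1) \<in> young mu"
    then show "1 \<le> i \<and> i \<le> length mu" unfolding young_def by simp
  next
    assume h: "1 \<le> i \<and> i \<le> length mu"
    then have "i - 1 < length mu" by linarith
    then have "1 \<le> mu ! (i - 1)" using pos by (simp add: Suc_leI)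
    then show "(i, 1) \<in> young mu" using h unfolding young_def by simp
  qed
qed

lemma young_row:
  assumes "i < length mu" "1 \<le> j"
  shows "(i + 1, j) \<in> young mu \<longleftrightarrow> j \<le> mu ! i"
  using assms unfolding young_def by simp

lemma young_inj:
  assumes p1: "is_partition mu" and p2: "is_partition nu" and e: "young mu = young nu"
  shows "mu = nu"
proof -
  have pos1: "\<And>i. i < length mu \<Longrightarrow> 0 < mu ! i" using p1 unfolding is_partition_def by auto
  have pos2: "\<And>i. i < length nu \<Longrightarrow> 0 < nu ! i" using p2 unfolding is_partition_def by auto
  have len: "length mu = length nu"
  proof (rule ccontr)
    assume "length mu \<noteq> length nu"
    then consider "length mu < length nu" | "length nu < length mu" by linarith
    then show False
    proof cases
      case 1
      then have "(length nu, 1) \<in> young nu" using young_first_col[OF p2] by simp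
      then have "(length nu, 1) \<in> young mu" using e by simp
      then show False using young_first_col[OF p1] 1 by simp
    next
      case 2
      then have "(length mu, 1) \<in> young mu" using young_first_col[OF p1] by simp
      then have "(length mu, 1) \<in> young nu" using e by simp
      then show False using young_first_col[OF p2] 2 by simp
    qed
  qed
  show ?thesis
  proof (rule nth_equalityI[OF len])
    fix i assume i: "i < length mu"
    have i2: "i < length nu" using i len by simp
    have m1: "1 \<le> mu ! i" using pos1[OF i] by simp
    have n1: "1 \<le> nu ! i" using pos2[OF i2] by simp
    have "(i + 1, mu ! i) \<in> young mu" using young_row[OF i m1] by simp
    then have "(i + 1, mu ! i) \<in> young nu" using e by simp
    then have a: "mu ! i \<le> nu ! i" using young_row[OF i2 m1] by simp
    have "(i + 1, nu ! i) \<in> young nu" using young_row[OF i2 n1] by simp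
    then have "(i + 1, nu ! i) \<in> young mu" using e by simp
    then have b: "nu ! i \<le> mu ! i" using young_row[OF i n1] by simp
    show "mu ! i = nu ! i" using a b by simp
  qed
qed

lemma box_minus_prop:
  assumes "dec b k" "dia b k = S"
  shows "is_partition (THE nu. is_partition nu \<and> young nu = S) \<and> young (THE nu. is_partition nu \<and> young nu = S) = S"
proof (rule theI')
  show "\<exists>!nu. is_partition nu \<and> young nu = S"
    using partition_exists[OF assms(1)] young_inj assms(2) by metis
qed


lemma compl_dia:
  assumes "length mu \<le> m" "\<forall>i. ext mu i \<le> n"
  shows "{(m - i + 1, n - j + 1) | i j. (i, j) \<in> box m n - young mu}
       = dia (\<lambda>r. if r < m then n - ext mu (m - 1 - r) else 0) m"
proof (intro set_eqI iffI)
  fix c assume "c \<in> {(m - i + 1, n - j + 1) | i j. (i, j) \<in> box m n - young mu}"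
  then obtain i j where c: "c = (m - i + 1, n - j + 1)" and ij: "1 \<le> i" "i \<le> m" "1 \<le> j" "j \<le> n"
    and ny: "(i, j) \<notin> dia (ext mu) m"
    unfolding young_dia[OF assms(1)] box_def by auto
  have "\<not> j \<le> ext mu (i - 1)" using ny ij unfolding dia_def by auto
  moreover have "m - 1 - (m - i + 1 - 1) = i - 1" using ij by simp
  ultimately show "c \<in> dia (\<lambda>r. if r < m then n - ext mu (m - 1 - r) else 0) m"
    unfolding c dia_def using ij by auto
next
  fix c assume "c \<in> dia (\<lambda>r. if r < m then n - ext mu (m - 1 - r) else 0) m"
  then obtain p q where c: "c = (p, q)" and pq: "1 \<le> p" "p \<le> m" "1 \<le> q" "q \<le> n - ext mu (m - p)"
    unfolding dia_def by (auto split: if_splits simp: diff_diff_add)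
  have e: "ext mu (m - p) \<le> n" using assms(2) by simp
  have "(m - p + 1, n - q + 1) \<in> box m n" using pq unfolding box_def by auto
  moreover have "(m - p + 1, n - q + 1) \<notin> dia (ext mu) m" using pq e unfolding dia_def by auto
  moreover have "c = (m - (m - p + 1) + 1, n - (n - q + 1) + 1)" using c pq e by auto
  ultimately show "c \<in> {(m - i + 1, n - j + 1) | i j. (i, j) \<in> box m n - young mu}"
    unfolding young_dia[OF assms(1)] by blast
qed

lemma dec_compl:
  assumes "dec a m"
  shows "dec (\<lambda>r. if r < m then n - a (m - 1 - r) else 0) m"
  using assms unfolding dec_def by (auto intro: diff_le_mono2)

lemma num_syt_box_minus:
  assumes "length mu \<le> m" "\<forall>i. ext mu i \<le> n" "is_partition mu"
  shows "real (num_syt (box_minus m n mu)) = Fr (\<lambda>r. if r < m then n - ext mu (m - 1 - r) else 0) m"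
proof -
  let ?b = "\<lambda>r. if r < m then n - ext mu (m - 1 - r) else 0"
  have d: "dec ?b m" by (rule dec_compl[OF dec_ext[OF assms(3)]])
  let ?S = "{(m - i + 1, n - j + 1) | i j. (i, j) \<in> box m n - young mu}"
  have cd: "dia ?b m = ?S" by (rule compl_dia[OF assms(1,2), symmetric])
  have "young (THE nu. is_partition nu \<and> young nu = ?S) = ?S" using box_minus_prop[OF d cd] by blast
  then have "young (box_minus m n mu) = ?S" unfolding box_minus_def .
  then have "young (box_minus m n mu) = dia ?b m" using cd by simp
  then show ?thesis using num_syt_dia d by blast
qed

lemma plus_part_partition:
  assumes "is_partition lam"
  shows "is_partition (plus_part lam)"
proof (cases lam)
  case Nil
  then show ?thesis unfolding plus_part_def is_partition_def by simp
next
  case (Cons x xs)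
  have "sorted_wrt (\<ge>) (x # xs)" "\<forall>y\<in>set (x # xs). 0 < y" using assms Cons unfolding is_partition_def by auto
  then show ?thesis using Cons unfolding plus_part_def is_partition_def by auto
qed

lemma ext_plus_part: "ext (plus_part lam) = (ext lam)(0 := ext lam 0 + 1)"
  by (cases lam) (auto simp: plus_part_def ext_def fun_eq_iff nth_Cons')

lemma cancel_aux:
  fixes x y A B D1 D2 :: real
  assumes "x \<noteq> 0" "y \<noteq> 0"
  shows "(x * A / D1) * (y * B / D2) / (x * y) = A * B / (D1 * D2)"
proof -
  have "(x * A / D1) * (y * B / D2) = (x * y) * (A * B / (D1 * D2))" by simp
  then show ?thesis using assms by simp
qed

theorem mainTheorem5:
  fixes m n :: nat and lam :: "nat list"
  assumes "is_partition lam"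
    and "young (plus_part lam) \<subseteq> box m n"
  shows "real (num_syt lam) * real (num_syt (box_minus m n (plus_part lam)))
           / (real (num_syt (plus_part lam)) * real (num_syt (box_minus m n lam)))
         = (real m + real (first_part lam)) * (real n - real (first_part lam))
           / ((real (psize lam) + 1) * (real m * real n - real (psize lam)))"
proof -
  note part = assms(1) and sub = assms(2)
  define pp where "pp = plus_part lam"
  define a where "a = ext lam"
  define ap where "ap = ext pp"
  have ppart: "is_partition pp" using plus_part_partition[OF part] pp_def by simp
  have ap_eq: "ap = a(0 := a 0 + 1)" unfolding ap_def a_def pp_def by (rule ext_plus_part)
  have lpp: "length pp = max 1 (length lam)" unfolding pp_def plus_part_def by (cases lam) auto
  have pos: "0 < pp ! (length pp - 1)" using ppart lpp unfolding is_partition_def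
    by (metis One_nat_def diff_less length_greater_0_conv less_numeral_extra(1) max.strict_coboundedI1 nth_mem list.size(3) not_less_zero)
  have "(length pp, 1) \<in> young pp" using pos lpp unfolding young_def by auto
  then have lm: "length pp \<le> m" using sub pp_def unfolding box_def by auto
  have m1: "1 \<le> m" using lm lpp by simp
  have lam_m: "length lam \<le> m" using lm lpp by simp
  have pp0: "pp ! 0 = a 0 + 1" unfolding pp_def a_def plus_part_def ext_def by (cases lam) auto
  have "(1, a 0 + 1) \<in> young pp" using lpp pp0 unfolding young_def by auto
  then have a0n: "a 0 + 1 \<le> n" using sub pp_def unfolding box_def by auto
  have deca: "dec a m" unfolding a_def by (rule dec_ext[OF part])
  have decap: "dec ap m" unfolding ap_def by (rule dec_ext[OF ppart])
  have ale: "a i \<le> a 0" for i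
  proof (cases "i < m")
    case True then show ?thesis using deca unfolding dec_def by simp
  next
    case False then show ?thesis using lam_m unfolding a_def ext_def by simp
  qed
  have apn: "\<forall>i. ext pp i \<le> n"
  proof
    fix i
    show "ext pp i \<le> n"
    proof (cases "i = 0")
      case True then show ?thesis using a0n unfolding ap_def[symmetric] ap_eq by simp
    next
      case False
      have "a i \<le> n" using ale[of i] a0n by linarith
      then show ?thesis using False unfolding ap_def[symmetric] ap_eq by simp
    qed
  qed
  have an: "\<forall>i. ext lam i \<le> n" using ale a0n unfolding a_def[symmetric] by (metis le_trans le_add1)
  define N where "N = (\<Sum>i<m. a i)"
  have psz: "psize lam = N" unfolding N_def a_def using psize_ext[OF lam_m] .
  have fp: "first_part lam = a 0" unfolding a_def first_part_def ext_def by (cases lam) auto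
  define b where "b = (\<lambda>r. if r < m then n - a (m - 1 - r) else 0)"
  define bp where "bp = (\<lambda>r. if r < m then n - ap (m - 1 - r) else 0)"
  have decb: "dec b m" unfolding b_def by (rule dec_compl[OF deca])
  have F1: "real (num_syt lam) = Fr a m" unfolding a_def using num_syt_dia[OF young_dia[OF lam_m] deca[unfolded a_def]] .
  have F2: "real (num_syt pp) = Fr ap m" unfolding ap_def using num_syt_dia[OF young_dia[OF lm] decap[unfolded ap_def]] .
  have F3: "real (num_syt (box_minus m n lam)) = Fr b m"
    using num_syt_box_minus[OF lam_m an part] unfolding b_def a_def .
  have F4: "real (num_syt (box_minus m n pp)) = Fr bp m"
    using num_syt_box_minus[OF lm apn ppart] unfolding bp_def ap_def .
  have ap0: "1 \<le> ap 0" using ap_eq by simp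
  have apa: "ap(0 := ap 0 - 1) = a" using ap_eq by auto
  have s1: "(\<Sum>j<m. (ap(0 := ap 0 - 1)) j) = (\<Sum>j<m. ap j) - 1" "1 \<le> (\<Sum>j<m. ap j)"
    using sum_upd_minus1[of 0 m ap] m1 ap0 by auto
  have sap: "(\<Sum>j<m. ap j) = N + 1"
    using s1 unfolding apa N_def by simp
  have R1: "Fr a m = Fr ap m * (real (lv ap m 0) * cf (\<lambda>j. real (lv ap m j)) m 0) / real (N + 1)"
    using Fr_ratio[OF lv_inj[OF decap] _ ap0] m1 apa sap by simp
  have bm: "b (m - 1) = n - a 0" using m1 unfolding b_def by simp
  have b1: "1 \<le> b (m - 1)" using bm a0n by simp
  have bbp: "b(m - 1 := b (m - 1) - 1) = bp"
    unfolding b_def bp_def ap_eq using m1 by (auto simp: fun_eq_iff)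
  have sb: "real (\<Sum>j<m. b j) = real m * real n - real N"
  proof -
    have "real (\<Sum>j<m. b j) = (\<Sum>j<m. real n - real (a (m - Suc j)))"
    proof (unfold of_nat_sum, rule sum.cong[OF refl])
      fix j assume "j \<in> {..<m}"
      have "a (m - Suc j) \<le> n" using ale[of "m - Suc j"] a0n by linarith
      then show "real (b j) = real n - real (a (m - Suc j))" using \<open>j \<in> {..<m}\<close> unfolding b_def
        by (simp add: of_nat_diff)
    qed
    also have "\<dots> = real m * real n - (\<Sum>j<m. real (a (m - Suc j)))" by (simp add: sum_subtractf)
    also have "(\<Sum>j<m. real (a (m - Suc j))) = real N"
      unfolding N_def of_nat_sum by (rule sum.nat_diff_reindex)
    finally show ?thesis .
  qed
  have R2: "Fr bp m = Fr b m * (real (lv b m (m - 1)) * cf (\<lambda>j. real (lv b m j)) m (m - 1)) / real (\<Sum>j<m. b j)"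
    using Fr_ratio[OF lv_inj[OF decb] _ b1] m1 bbp by simp
  have cc: "cf (\<lambda>j. real (lv ap m j)) m 0 * cf (\<lambda>j. real (lv b m j)) m (m - 1) = 1"
  proof -
    define f where "f j = (real (lv ap m 0) - real (lv ap m j) - 1) / (real (lv ap m 0) - real (lv ap m j))" for j
    define g where "g j = (real (lv b m (m - 1)) - real (lv b m j) - 1) / (real (lv b m (m - 1)) - real (lv b m j))" for j
    have c1: "cf (\<lambda>j. real (lv ap m j)) m 0 = (\<Prod>t\<in>{..<m} - {0}. f t)" unfolding cf_def f_def ..
    have "cf (\<lambda>j. real (lv b m j)) m (m - 1) = (\<Prod>j\<in>{..<m} - {m - 1}. g j)" unfolding cf_def g_def ..
    also have "\<dots> = (\<Prod>t\<in>{..<m} - {0}. g (m - 1 - t))"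
      by (rule prod.reindex_bij_witness[where i = "\<lambda>t. m - 1 - t" and j = "\<lambda>j. m - 1 - j"]) auto
    finally have c2: "cf (\<lambda>j. real (lv b m j)) m (m - 1) = (\<Prod>t\<in>{..<m} - {0}. g (m - 1 - t))" .
    have "(\<Prod>t\<in>{..<m} - {0}. f t) * (\<Prod>t\<in>{..<m} - {0}. g (m - 1 - t)) = (\<Prod>t\<in>{..<m} - {0}. f t * g (m - 1 - t))"
      by (simp add: prod.distrib)
    also have "\<dots> = (\<Prod>t\<in>{..<m} - {0}. 1)"
    proof (rule prod.cong[OF refl])
      fix t assume t: "t \<in> {..<m} - {0}"
      then have tm: "t < m" "0 < t" by auto
      define u where "u = real (a 0) + 1 + real t - real (a t)"
      have at: "a t \<le> a 0" by (rule ale)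
      have u1: "u - 1 \<ge> 1" unfolding u_def using at tm by simp
      have l0: "real (lv ap m 0) = real (a 0) + real m" unfolding lv_def ap_eq using m1 by (simp add: of_nat_diff)
      have lt: "real (lv ap m t) = real (a t) + real m - 1 - real t" unfolding lv_def ap_eq using tm by (simp add: of_nat_diff)
      have L1: "real (lv b m (m - 1)) = real n - real (a 0)" unfolding lv_def b_def using m1 a0n by (simp add: of_nat_diff)
      have Lt: "real (lv b m (m - 1 - t)) = real n - real (a t) + real t"
        unfolding lv_def b_def using tm a0n at by (simp add: of_nat_diff)
      have "f t = (u - 1) / u" unfolding f_def l0 lt u_def by (simp add: algebra_simps)
      moreover have "g (m - 1 - t) = u / (u - 1)"
      proof -
        have "g (m - 1 - t) = (-(u - 1) - 1) / (-(u - 1))" unfolding g_def L1 Lt u_def by (simp add: algebra_simps)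
        also have "\<dots> = u / (u - 1)" using u1 by (simp add: field_simps)
        finally show ?thesis .
      qed
      ultimately show "f t * g (m - 1 - t) = 1" using u1 by simp
    qed
    finally show ?thesis using c1 c2 by simp
  qed
  have l0: "real (lv ap m 0) = real (a 0) + real m" unfolding lv_def ap_eq using m1 by (simp add: of_nat_diff)
  have L1: "real (lv b m (m - 1)) = real n - real (a 0)" unfolding lv_def b_def using m1 a0n by (simp add: of_nat_diff)
  have Fap: "Fr ap m > 0" by (rule Fr_pos[OF decap])
  have Fb: "Fr b m > 0" by (rule Fr_pos[OF decb])
  define c1 where "c1 = cf (\<lambda>j. real (lv ap m j)) m 0"
  define c2 where "c2 = cf (\<lambda>j. real (lv b m j)) m (m - 1)"
  have "real (num_syt lam) * real (num_syt (box_minus m n pp)) / (real (num_syt pp) * real (num_syt (box_minus m n lam)))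
      = Fr a m * Fr bp m / (Fr ap m * Fr b m)" unfolding F1 F2 F3 F4 ..
  also have "\<dots> = (Fr ap m * ((real (a 0) + real m) * c1) / real (N + 1)) * (Fr b m * ((real n - real (a 0)) * c2) / (real m * real n - real N)) / (Fr ap m * Fr b m)"
    unfolding R1 R2 sb l0 L1 c1_def c2_def ..
  also have "\<dots> = (real (a 0) + real m) * (real n - real (a 0)) * (c1 * c2) / (real (N + 1) * (real m * real n - real N))"
    using cancel_aux[of "Fr ap m" "Fr b m"] Fap Fb by (simp add: ac_simps)
  also have "\<dots> = (real m + real (a 0)) * (real n - real (a 0)) / ((real N + 1) * (real m * real n - real N))"
    using cc unfolding c1_def c2_def by (simp add: algebra_simps)
  finally show ?thesis unfolding pp_def psz fp .
qed


end
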